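(* Let $(G,E,\phi_c)$ be a twisted Exel–Pardo tuple. Then the Cohn algebra $C(G,E,\phi_c)$ is a free $\ell$-module with basis \[ \mathcal B=\{\alpha g\beta^*:\ \alpha,\beta\in\mathcal P(E),\ g\in G,\ g(r(\beta))=r(\alpha)\}. \]
   Context: $\ell$ is a commutative unital ring, $\mathcal U(\ell)$ its unit group. For a graph $E=(E^0,E^1,r,s)$, $\mathcal P(E)$ is the set of finite paths $e_1\cdots e_n$ ($r(e_i)=s(e_{i+1})$), including vertices as paths of length $0$; $s(e_1\cdots e_n)=s(e_1)$, $r(e_1\cdots e_n)=r(e_n)$. A twisted Exel–Pardo tuple $(G,E,\phi_c)$: a group $G$ acting on $E$ by graph automorphisms, a map $\phi:G\times E^1\to G$ with $\phi(gh,e)=\phi(g,h(e))\phi(h,e)$ and $\phi(g,e)(v)=g(v)$ for all $v\in E^0$, and $c:G\times E^1\to\mathcal U(\ell)$ with $c(gh,e)=c(g,h(e))c(h,e)$. $C(G,E,\phi_c)$ is the $\ell$-algebra generated by symbols $e,e^*$ ($e\in E^1$) and $vg$ ($v\in E^0$, $g\in G$), writing $v:=v1$, subject to (for all $v,w,e,f,g,h$): $e=s(e)er(e)$, $e^*=r(e)e^*s(e)$, $e^*f=\delta_{e,f}r(e)$, $(vg)(wh)=\delta_{v,g(w)}v(gh)$, $(vg)e=\delta_{v,g(s(e))}c(g,e)\,g(e)(r(g(e))\phi(g,e))$, $e^*(vg)=\delta_{v,s(e)}c(g,g^{-1}(e))(r(e)\phi(g,g^{-1}(e)))(g^{-1}(e))^*$.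 For a path $\alpha=e_1\cdots e_n$ also write $\alpha$ for the product $e_1\cdots e_n$ in this algebra and $\alpha^*=e_n^*\cdots e_1^*$ (for a vertex $v$, $v^*=v$); for $\alpha,\beta\in\mathcal P(E)$, $g\in G$ with $g(r(\beta))=r(\alpha)$, put $\alpha g\beta^*:=\alpha\,(r(\alpha)g)\,\beta^*$. *)

theory Defs
  imports Main
begin

text \<open>The graph E has vertex type 'v and edge type 'e (E^0 = UNIV, E^1 = UNIV),
range and source maps r, s. The group G is a type of class group_add, written ADDITIVELY:
the product gh is g + h, the unit is 0, the inverse of g is -g.\<close>

definition twisted_EP_tuple ::
  "('e \<Rightarrow> 'v) \<Rightarrow> ('e \<Rightarrow> 'v) \<Rightarrow> ('g::group_add \<Rightarrow> 'v \<Rightarrow> 'v) \<Rightarrow> ('g \<Rightarrow> 'e \<Rightarrow> 'e)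
   \<Rightarrow> ('g \<Rightarrow> 'e \<Rightarrow> 'g) \<Rightarrow> ('g \<Rightarrow> 'e \<Rightarrow> 'l::comm_ring_1) \<Rightarrow> bool" where
  "twisted_EP_tuple r s av ae phi c \<longleftrightarrow>
     \<comment> \<open>G acts on E by graph automorphisms\<close>
     av 0 = id \<and> ae 0 = id \<and>
     (\<forall>g h. av (g + h) = av g \<circ> av h) \<and> (\<forall>g h. ae (g + h) = ae g \<circ> ae h) \<and>
     (\<forall>g. bij (av g) \<and> bij (ae g)) \<and>
     (\<forall>g e. s (ae g e) = av g (s e) \<and> r (ae g e) = av g (r e)) \<and>
     \<comment> \<open>the cocycle phi\<close>
     (\<forall>g h e. phi (g + h) e = phi g (ae h e) + phi h e) \<and>
     (\<forall>g e v. av (phi g e) v = av g v) \<and>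
     \<comment> \<open>the unit-valued cocycle c\<close>
     (\<forall>g e. c g e dvd 1) \<and>
     (\<forall>g h e. c (g + h) e = c g (ae h e) * c h e)"

text \<open>Generators of the Cohn algebra: e, e^*, and (v g).\<close>
datatype ('v,'e,'g) cgen = Ed 'e | Ghost 'e | VG 'v 'g

text \<open>The free (non-unital) ell-algebra on the generators: ell-valued functions on words,
with finite support on non-empty words; product = convolution along concatenation.\<close>
type_synonym ('v,'e,'g,'l) falg = "('v,'e,'g) cgen list \<Rightarrow> 'l"

definition fzero :: "('v,'e,'g,'l::comm_ring_1) falg" where "fzero = (\<lambda>w. 0)"
definition fadd :: "('v,'e,'g,'l::comm_ring_1) falg \<Rightarrow> ('v,'e,'g,'l) falg \<Rightarrow> ('v,'e,'g,'l) falg"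
  where "fadd x y = (\<lambda>w. x w + y w)"
definition fdiff :: "('v,'e,'g,'l::comm_ring_1) falg \<Rightarrow> ('v,'e,'g,'l) falg \<Rightarrow> ('v,'e,'g,'l) falg"
  where "fdiff x y = (\<lambda>w. x w - y w)"
definition fsmult :: "'l::comm_ring_1 \<Rightarrow> ('v,'e,'g,'l) falg \<Rightarrow> ('v,'e,'g,'l) falg"
  where "fsmult a x = (\<lambda>w. a * x w)"
definition fmul :: "('v,'e,'g,'l::comm_ring_1) falg \<Rightarrow> ('v,'e,'g,'l) falg \<Rightarrow> ('v,'e,'g,'l) falg"
  where "fmul x y = (\<lambda>w. \<Sum>i\<le>length w. x (take i w) * y (drop i w))"
definition mono :: "'l::comm_ring_1 \<Rightarrow> ('v,'e,'g) cgen list \<Rightarrow> ('v,'e,'g,'l) falg"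
  where "mono a u = (\<lambda>w. if w = u then a else 0)"

abbreviation wd :: "('v,'e,'g) cgen list \<Rightarrow> ('v,'e,'g,'l::comm_ring_1) falg"
  where "wd u \<equiv> mono 1 u"

text \<open>The defining relations of C(G,E,phi_c), each as (lhs - rhs); recall v := v0.\<close>
inductive_set cohn_relators ::
  "('e \<Rightarrow> 'v) \<Rightarrow> ('e \<Rightarrow> 'v) \<Rightarrow> ('g::group_add \<Rightarrow> 'v \<Rightarrow> 'v) \<Rightarrow> ('g \<Rightarrow> 'e \<Rightarrow> 'e)
   \<Rightarrow> ('g \<Rightarrow> 'e \<Rightarrow> 'g) \<Rightarrow> ('g \<Rightarrow> 'e \<Rightarrow> 'l::comm_ring_1) \<Rightarrow> ('v,'e,'g,'l) falg set"
  for r s av ae phi c where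
  rel1: "fdiff (wd [Ed e]) (wd [VG (s e) 0, Ed e, VG (r e) 0]) \<in> cohn_relators r s av ae phi c"
| rel2: "fdiff (wd [Ghost e]) (wd [VG (r e) 0, Ghost e, VG (s e) 0]) \<in> cohn_relators r s av ae phi c"
| rel3: "fdiff (wd [Ghost e, Ed f]) (if e = f then wd [VG (r e) 0] else fzero)
           \<in> cohn_relators r s av ae phi c"
| rel4: "fdiff (wd [VG v g, VG w h]) (if v = av g w then wd [VG v (g + h)] else fzero)
           \<in> cohn_relators r s av ae phi c"
| rel5: "fdiff (wd [VG v g, Ed e])
           (if v = av g (s e) then fsmult (c g e) (wd [Ed (ae g e), VG (r (ae g e)) (phi g e)])
            else fzero) \<in> cohn_relators r s av ae phi c"
| rel6: "fdiff (wd [Ghost e, VG v g])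
           (if v = s e then fsmult (c g (ae (-g) e)) (wd [VG (r e) (phi g (ae (-g) e)), Ghost (ae (-g) e)])
            else fzero) \<in> cohn_relators r s av ae phi c"

inductive_set ideal_gen :: "('v,'e,'g,'l::comm_ring_1) falg set \<Rightarrow> ('v,'e,'g,'l) falg set"
  for R where
  gen: "x \<in> R \<Longrightarrow> x \<in> ideal_gen R"
| zero: "fzero \<in> ideal_gen R"
| add: "x \<in> ideal_gen R \<Longrightarrow> y \<in> ideal_gen R \<Longrightarrow> fadd x y \<in> ideal_gen R"
| mul: "x \<in> ideal_gen R \<Longrightarrow> fmul (fmul (mono a u) x) (mono 1 v) \<in> ideal_gen R"

definition cohn_ideal where
  "cohn_ideal r s av ae phi c = ideal_gen (cohn_relators r s av ae phi c)"

text \<open>Finite paths: a pair (v, es); (v, []) is the vertex v, and (v, e1...en) with n > 0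
is the edge path e1...en, where v = s(e1) (so v is determined by the edges).\<close>
type_synonym ('v,'e) path = "'v \<times> 'e list"

definition is_path :: "('e \<Rightarrow> 'v) \<Rightarrow> ('e \<Rightarrow> 'v) \<Rightarrow> ('v,'e) path \<Rightarrow> bool" where
  "is_path r s p \<longleftrightarrow> (case p of (v, es) \<Rightarrow>
     es = [] \<or> (s (hd es) = v \<and> (\<forall>i. Suc i < length es \<longrightarrow> r (es ! i) = s (es ! Suc i))))"

definition prange :: "('e \<Rightarrow> 'v) \<Rightarrow> ('v,'e) path \<Rightarrow> 'v" where
  "prange r p = (case p of (v, es) \<Rightarrow> if es = [] then v else r (last es))"

definition pword :: "('v,'e) path \<Rightarrow> ('v,'e,'g::group_add) cgen list" where
  "pword p = (case p of (v, es) \<Rightarrow> if es = [] then [VG v 0] else map Ed es)"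
definition pword_star :: "('v,'e) path \<Rightarrow> ('v,'e,'g::group_add) cgen list" where
  "pword_star p = (case p of (v, es) \<Rightarrow> if es = [] then [VG v 0] else rev (map Ghost es))"

definition basis_idx :: "('e \<Rightarrow> 'v) \<Rightarrow> ('e \<Rightarrow> 'v) \<Rightarrow> ('g::group_add \<Rightarrow> 'v \<Rightarrow> 'v)
    \<Rightarrow> (('v,'e) path \<times> 'g \<times> ('v,'e) path) set" where
  "basis_idx r s av = {(a, g, b). is_path r s a \<and> is_path r s b \<and> av g (prange r b) = prange r a}"

definition basis_elt :: "('e \<Rightarrow> 'v) \<Rightarrow> (('v,'e) path \<times> 'g::group_add \<times> ('v,'e) path)
    \<Rightarrow> ('v,'e,'g,'l::comm_ring_1) falg" where
  "basis_elt r t = (case t of (a, g, b) \<Rightarrow>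
     fmul (fmul (wd (pword a)) (wd [VG (prange r a) g])) (wd (pword_star b)))"

definition lincomb :: "('e \<Rightarrow> 'v) \<Rightarrow> (('v,'e) path \<times> 'g::group_add \<times> ('v,'e) path \<Rightarrow> 'l::comm_ring_1)
    \<Rightarrow> ('v,'e,'g,'l) falg" where
  "lincomb r k = (\<lambda>w. \<Sum>t\<in>{t. k t \<noteq> 0}. k t * basis_elt r t w)"

end

theory Submission
  imports Defs
begin

lemma fmul_mono_left:
  "fmul (Defs.mono a u) y w = (if take (length u) w = u then a * y (drop (length u) w) else 0)"
proof -
  have "fmul (Defs.mono a u) y w = (\<Sum>i\<le>length w. (if i = length u \<and> take (length u) w = u then a * y (drop (length u) w) else 0))"
    unfolding fmul_def Defs.mono_def
    by (rule sum.cong) auto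
  also have "\<dots> = (if take (length u) w = u then a * y (drop (length u) w) else 0)"
  proof (cases "take (length u) w = u")
    case True
    then have "length u \<le> length w" by (metis length_take min.absorb_iff1 min.commute)
    then show ?thesis using True by (simp add: sum.delta)
  qed simp
  finally show ?thesis .
qed

lemma fmul_mono_right:
  "fmul x (Defs.mono b v) w = (if length v \<le> length w \<and> drop (length w - length v) w = v then x (take (length w - length v) w) * b else 0)"
proof -
  have "fmul x (Defs.mono b v) w = (\<Sum>i\<le>length w. (if i = length w - length v \<and> length v \<le> length w \<and> drop (length w - length v) w = v then x (take (length w - length v) w) * b else 0))"
    unfolding fmul_def Defs.mono_def
    by (rule sum.cong) auto
  also have "\<dots> = (if length v \<le> length w \<and> drop (length w - length v) w = v then x (take (length w - length v) w) * b else 0)"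
    apply (cases "length v \<le> length w \<and> drop (length w - length v) w = v")
     apply (simp add: sum.delta)
    apply (subst if_not_P, assumption)
    apply (rule sum.neutral)
    apply auto
    done
  finally show ?thesis .
qed

definition sw where "sw a u x v = fmul (fmul (Defs.mono a u) x) (Defs.mono 1 v)"

lemma sw_app: "sw a u x v (u @ w @ v) = a * x w"
  unfolding sw_def fmul_mono_right fmul_mono_left by simp

lemma sw_notin: assumes "\<not> (\<exists>w. w' = u @ w @ v)" shows "sw a u x v w' = 0"
proof -
  { assume h1: "length v \<le> length w'" "drop (length w' - length v) w' = v"
      and h2: "take (length u) (take (length w' - length v) w') = u"
    let ?m = "take (length w' - length v) w'"
    have "w' = ?m @ v" using h1 by (metis append_take_drop_id)
    moreover have "?m = u @ drop (length u) ?m" using h2 by (metis append_take_drop_id)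
    ultimately have False using assms by (metis append.assoc)
  }
  then show ?thesis unfolding sw_def fmul_mono_right fmul_mono_left by auto
qed

lemma sw_cases: "sw a u x v w' = (if \<exists>w. w' = u @ w @ v then a * x (THE w. w' = u @ w @ v) else 0)"
proof (cases "\<exists>w. w' = u @ w @ v")
  case True
  then obtain w where w: "w' = u @ w @ v" by blast
  have "(THE w. w' = u @ w @ v) = w" by (rule the_equality) (use w in auto)
  then show ?thesis using w sw_app by auto
qed (use sw_notin in auto)

lemma sw_mono: "sw a u (Defs.mono b w) v = Defs.mono (a * b) (u @ w @ v)"
proof
  fix w'
  show "sw a u (Defs.mono b w) v w' = Defs.mono (a * b) (u @ w @ v) w'"
  proof (cases "\<exists>w0. w' = u @ w0 @ v")
    case True
    then obtain w0 where "w' = u @ w0 @ v" by blast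
    then show ?thesis by (simp add: sw_app Defs.mono_def)
  next
    case False
    then show ?thesis using sw_notin[OF False] by (auto simp: Defs.mono_def)
  qed
qed

lemma sw_lin: "sw a u (\<lambda>w. p * x w + q * y w) v = (\<lambda>w. p * sw a u x v w + q * sw a u y v w)"
proof
  fix w'
  show "sw a u (\<lambda>w. p * x w + q * y w) v w' = p * sw a u x v w' + q * sw a u y v w'"
  proof (cases "\<exists>w0. w' = u @ w0 @ v")
    case True
    then obtain w0 where "w' = u @ w0 @ v" by blast
    then show ?thesis by (simp add: sw_app algebra_simps)
  next
    case False
    then show ?thesis by (simp only: sw_notin[OF False]) simp
  qed
qed

lemma sw_emp: "sw a [] x [] = fsmult a x"
  using sw_app[of a "[]" x "[]"] by (auto simp: fsmult_def)


lemma fsmult_mono: "fsmult b (Defs.mono a w) = Defs.mono (b * a) w"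
  by (auto simp: fsmult_def Defs.mono_def)

lemma mono_zero: "Defs.mono 0 w = fzero"
  by (auto simp: fzero_def Defs.mono_def)

lemma I_zero: "fzero \<in> ideal_gen R" by (rule ideal_gen.zero)
lemma I_add: "x \<in> ideal_gen R \<Longrightarrow> y \<in> ideal_gen R \<Longrightarrow> fadd x y \<in> ideal_gen R"
  by (rule ideal_gen.add)
lemma I_sw: "x \<in> ideal_gen R \<Longrightarrow> sw a u x v \<in> ideal_gen R"
  unfolding sw_def by (rule ideal_gen.mul)
lemma I_smult: "x \<in> ideal_gen R \<Longrightarrow> fsmult a x \<in> ideal_gen R"
  using I_sw[of x R a "[]" "[]"] by (simp add: sw_emp)
lemma I_diff: "x \<in> ideal_gen R \<Longrightarrow> y \<in> ideal_gen R \<Longrightarrow> fdiff x y \<in> ideal_gen R"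
proof -
  assume "x \<in> ideal_gen R" "y \<in> ideal_gen R"
  then have "fadd x (fsmult (-1) y) \<in> ideal_gen R" by (intro I_add I_smult)
  moreover have "fadd x (fsmult (-1) y) = fdiff x y" by (auto simp: fadd_def fsmult_def fdiff_def)
  ultimately show ?thesis by simp
qed

lemma I_sum: "finite S \<Longrightarrow> (\<forall>i\<in>S. f i \<in> ideal_gen R) \<Longrightarrow> (\<lambda>w. \<Sum>i\<in>S. f i w) \<in> ideal_gen R"
proof (induction S rule: finite_induct)
  case empty
  then show ?case using I_zero[of R] by (simp add: fzero_def)
next
  case (insert i S)
  then have "fadd (f i) (\<lambda>w. \<Sum>i\<in>S. f i w) \<in> ideal_gen R" by (intro I_add) auto
  then show ?case using insert by (simp add: fadd_def)
qed

definition cg where "cg R x y \<longleftrightarrow> fdiff x y \<in> ideal_gen R"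

lemma cg_refl: "cg R x x"
proof -
  have "fdiff x x = fzero" by (auto simp: fdiff_def fzero_def)
  then show ?thesis unfolding cg_def using I_zero by metis
qed

lemma cg_sym: "cg R x y \<Longrightarrow> cg R y x"
proof -
  assume "cg R x y"
  then have "fsmult (-1) (fdiff x y) \<in> ideal_gen R" unfolding cg_def by (rule I_smult)
  moreover have "fsmult (-1) (fdiff x y) = fdiff y x" by (auto simp: fsmult_def fdiff_def)
  ultimately show ?thesis unfolding cg_def by simp
qed

lemma cg_trans: "cg R x y \<Longrightarrow> cg R y z \<Longrightarrow> cg R x z"
proof -
  assume "cg R x y" "cg R y z"
  then have "fadd (fdiff x y) (fdiff y z) \<in> ideal_gen R" unfolding cg_def by (rule I_add)
  moreover have "fadd (fdiff x y) (fdiff y z) = fdiff x z" by (auto simp: fadd_def fdiff_def)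
  ultimately show ?thesis unfolding cg_def by simp
qed

lemma cg_smult: "cg R x y \<Longrightarrow> cg R (fsmult a x) (fsmult a y)"
proof -
  assume "cg R x y"
  then have "fsmult a (fdiff x y) \<in> ideal_gen R" unfolding cg_def by (rule I_smult)
  moreover have "fsmult a (fdiff x y) = fdiff (fsmult a x) (fsmult a y)" by (auto simp: fsmult_def fdiff_def algebra_simps)
  ultimately show ?thesis unfolding cg_def by simp
qed

lemma cg_ctx: "cg R x y \<Longrightarrow> cg R (sw 1 u x v) (sw 1 u y v)"
proof -
  assume "cg R x y"
  then have "sw 1 u (fdiff x y) v \<in> ideal_gen R" unfolding cg_def by (rule I_sw)
  moreover have "fdiff x y = (\<lambda>w. 1 * x w + (-1) * y w)" by (auto simp: fdiff_def)
  ultimately have "sw 1 u (\<lambda>w. 1 * x w + (-1) * y w) v \<in> ideal_gen R" by simp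
  then show ?thesis unfolding cg_def sw_lin by (simp add: fdiff_def)
qed

definition cw where "cw R w1 a w2 \<longleftrightarrow> cg R (Defs.mono 1 w1) (Defs.mono a w2)"

lemma cw_refl: "cw R w 1 w" unfolding cw_def by (rule cg_refl)

lemma cw_ctx: "cw R w1 a w2 \<Longrightarrow> cw R (u @ w1 @ v) a (u @ w2 @ v)"
  unfolding cw_def using cg_ctx[of R "Defs.mono 1 w1" "Defs.mono a w2" u v] by (simp add: sw_mono)

lemma cw_ctxl: "cw R w1 a w2 \<Longrightarrow> cw R (u @ w1) a (u @ w2)"
  using cw_ctx[of R w1 a w2 u "[]"] by simp
lemma cw_ctxr: "cw R w1 a w2 \<Longrightarrow> cw R (w1 @ v) a (w2 @ v)"
  using cw_ctx[of R w1 a w2 "[]" v] by simp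
lemma cw_cons: "cw R w1 a w2 \<Longrightarrow> cw R (x # w1) a (x # w2)"
  using cw_ctx[of R w1 a w2 "[x]" "[]"] by simp

lemma cw_trans: "cw R w1 b w2 \<Longrightarrow> cw R w2 a w3 \<Longrightarrow> cw R w1 (b * a) w3"
  unfolding cw_def
proof -
  assume h1: "cg R (Defs.mono 1 w1) (Defs.mono b w2)" and h2: "cg R (Defs.mono 1 w2) (Defs.mono a w3)"
  from cg_smult[OF h2, of b] have "cg R (Defs.mono b w2) (Defs.mono (b * a) w3)" by (simp add: fsmult_mono)
  with h1 show "cg R (Defs.mono 1 w1) (Defs.mono (b * a) w3)" by (rule cg_trans)
qed

lemma cw_trans1: "cw R w1 1 w2 \<Longrightarrow> cw R w2 a w3 \<Longrightarrow> cw R w1 a w3"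
  using cw_trans[of R w1 1 w2 a w3] by simp
lemma cw_trans1': "cw R w1 a w2 \<Longrightarrow> cw R w2 1 w3 \<Longrightarrow> cw R w1 a w3"
  using cw_trans[of R w1 a w2 1 w3] by simp

lemma cw_sym1: "cw R w1 1 w2 \<Longrightarrow> cw R w2 1 w1"
  unfolding cw_def by (rule cg_sym)

lemma cw_zero: "cw R w1 0 w2 \<Longrightarrow> cw R (u @ w1 @ v) 0 w3"
  unfolding cw_def using cg_ctx[of R "Defs.mono 1 w1" "Defs.mono 0 w2" u v] by (simp add: sw_mono, simp add: mono_zero)

lemma cw_zero': "cw R w1 0 w2 \<Longrightarrow> cw R w1 0 w3"
  unfolding cw_def by (simp add: mono_zero)

lemma cw_gen: "fdiff (Defs.mono 1 w1) (Defs.mono a w2) \<in> R \<Longrightarrow> cw R w1 a w2"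
  unfolding cw_def cg_def by (rule ideal_gen.gen)


locale tep =
  fixes r s :: "'e \<Rightarrow> 'v" and av :: "'g::group_add \<Rightarrow> 'v \<Rightarrow> 'v" and ae :: "'g \<Rightarrow> 'e \<Rightarrow> 'e"
    and phi :: "'g \<Rightarrow> 'e \<Rightarrow> 'g" and c :: "'g \<Rightarrow> 'e \<Rightarrow> 'l::comm_ring_1"
  assumes tep: "twisted_EP_tuple r s av ae phi c"
begin

lemma av0[simp]: "av 0 x = x" using tep unfolding twisted_EP_tuple_def by simp
lemma ae0[simp]: "ae 0 x = x" using tep unfolding twisted_EP_tuple_def by simp
lemma av_add: "av (g + h) x = av g (av h x)" using tep unfolding twisted_EP_tuple_def by simp
lemma ae_add: "ae (g + h) x = ae g (ae h x)" using tep unfolding twisted_EP_tuple_def by simp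
lemma s_ae[simp]: "s (ae g e) = av g (s e)" using tep unfolding twisted_EP_tuple_def by simp
lemma r_ae[simp]: "r (ae g e) = av g (r e)" using tep unfolding twisted_EP_tuple_def by simp
lemma phi_add: "phi (g + h) e = phi g (ae h e) + phi h e" using tep unfolding twisted_EP_tuple_def by simp
lemma av_phi[simp]: "av (phi g e) v = av g v" using tep unfolding twisted_EP_tuple_def by simp
lemma c_add: "c (g + h) e = c g (ae h e) * c h e" using tep unfolding twisted_EP_tuple_def by simp
lemma c_unit: "c g e dvd 1" using tep unfolding twisted_EP_tuple_def by simp

lemma av_inv1[simp]: "av g (av (- g) x) = x" using av_add[of g "-g" x] by simp
lemma av_inv2[simp]: "av (- g) (av g x) = x" using av_add[of "-g" g x] by simp
lemma ae_inv1[simp]: "ae g (ae (- g) x) = x" using ae_add[of g "-g" x] by simp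
lemma ae_inv2[simp]: "ae (- g) (ae g x) = x" using ae_add[of "-g" g x] by simp
lemma av_inj: "av g x = av g y \<longleftrightarrow> x = y" by (metis av_inv2)
lemma ae_inj: "ae g x = ae g y \<longleftrightarrow> x = y" by (metis ae_inv2)

lemma c0[simp]: "c 0 e = 1"
proof -
  have h: "c 0 e = c 0 e * c 0 e" by (metis c_add add.right_neutral ae0)
  obtain k where k: "1 = c 0 e * k" using c_unit[of 0 e] by (auto elim: dvdE)
  have "c 0 e = c 0 e * (c 0 e * k)" using k by simp
  also have "\<dots> = (c 0 e * c 0 e) * k" by (simp add: mult.assoc)
  also have "\<dots> = 1" by (simp only: h[symmetric] k[symmetric])
  finally show ?thesis .
qed

lemma phi0[simp]: "phi 0 e = 0"
proof -
  have "phi 0 e + phi 0 e = phi 0 e + 0" by (metis phi_add add.right_neutral ae0)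
  then show ?thesis by (rule add_left_imp_eq)
qed

fun chain :: "'e list \<Rightarrow> bool" where
  "chain [] = True"
| "chain [e] = True"
| "chain (e1 # e2 # es) = (r e1 = s e2 \<and> chain (e2 # es))"

lemma chain_nth: "chain es \<longleftrightarrow> (\<forall>i. Suc i < length es \<longrightarrow> r (es ! i) = s (es ! Suc i))"
proof (induction es rule: chain.induct)
  case (3 e1 e2 es)
  show ?case
  proof
    assume "chain (e1 # e2 # es)"
    then show "\<forall>i. Suc i < length (e1 # e2 # es) \<longrightarrow> r ((e1 # e2 # es) ! i) = s ((e1 # e2 # es) ! Suc i)"
      using 3 by (auto simp: nth_Cons split: nat.splits)
  next
    assume h: "\<forall>i. Suc i < length (e1 # e2 # es) \<longrightarrow> r ((e1 # e2 # es) ! i) = s ((e1 # e2 # es) ! Suc i)"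
    have "r e1 = s e2" using h[rule_format, of 0] by simp
    moreover have "\<forall>i. Suc i < length (e2 # es) \<longrightarrow> r ((e2 # es) ! i) = s ((e2 # es) ! Suc i)"
    proof (intro allI impI)
      fix i assume "Suc i < length (e2 # es)"
      then show "r ((e2 # es) ! i) = s ((e2 # es) ! Suc i)" using h[rule_format, of "Suc i"] by simp
    qed
    ultimately show "chain (e1 # e2 # es)" using 3 by simp
  qed
qed auto

lemma is_path_iff: "is_path r s (v, es) \<longleftrightarrow> es = [] \<or> (s (hd es) = v \<and> chain es)"
  unfolding is_path_def chain_nth by simp

lemma chain_Cons: "chain (e # es) \<longleftrightarrow> chain es \<and> (es \<noteq> [] \<longrightarrow> r e = s (hd es))"
  by (cases es) auto

lemma chain_snoc: "chain (es @ [e]) \<longleftrightarrow> chain es \<and> (es \<noteq> [] \<longrightarrow> r (last es) = s e)"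
  by (induction es rule: chain.induct) auto

fun pe :: "'g \<Rightarrow> 'e list \<Rightarrow> 'e list" where
  "pe h [] = []"
| "pe h (e # es) = ae h e # pe (phi h e) es"
fun pg :: "'g \<Rightarrow> 'e list \<Rightarrow> 'g" where
  "pg h [] = h"
| "pg h (e # es) = pg (phi h e) es"
fun pc :: "'g \<Rightarrow> 'e list \<Rightarrow> 'l" where
  "pc h [] = 1"
| "pc h (e # es) = c h e * pc (phi h e) es"

lemma pe0[simp]: "pe 0 es = es" by (induction es) auto
lemma pg0[simp]: "pg 0 es = 0" by (induction es) auto
lemma pc0[simp]: "pc 0 es = 1" by (induction es) auto

lemma pe_add: "pe (g + h) es = pe g (pe h es)"
  by (induction es arbitrary: g h) (auto simp: ae_add phi_add)
lemma pg_add: "pg (g + h) es = pg g (pe h es) + pg h es"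
  by (induction es arbitrary: g h) (auto simp: phi_add)
lemma pc_add: "pc (g + h) es = pc g (pe h es) * pc h es"
  by (induction es arbitrary: g h) (auto simp: phi_add c_add algebra_simps)

lemma pe_Nil[simp]: "pe h es = [] \<longleftrightarrow> es = []" by (cases es) auto
lemma hd_pe: "es \<noteq> [] \<Longrightarrow> hd (pe h es) = ae h (hd es)" by (cases es) auto
lemma last_pe: "es \<noteq> [] \<Longrightarrow> r (last (pe h es)) = av h (r (last es))"
  by (induction es arbitrary: h) auto
lemma chain_pe: "chain es \<Longrightarrow> chain (pe h es)"
  by (induction es arbitrary: h rule: chain.induct) auto
lemma pg_av[simp]: "av (pg h es) x = av h x"
  by (induction es arbitrary: h) auto

end

context tep begin

fun act1 :: "('v,'e,'g) cgen \<Rightarrow> (('v,'e) path \<times> 'g \<times> ('v,'e) path) option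
    \<Rightarrow> 'l \<times> (('v,'e) path \<times> 'g \<times> ('v,'e) path) option" where
  "act1 (Ed e) None = (1, Some ((s e, [e]), 0, (r e, [])))"
| "act1 (Ghost e) None = (1, Some ((r e, []), 0, (s e, [e])))"
| "act1 (VG v h) None = (1, Some ((v, []), h, (av (-h) v, [])))"
| "act1 (Ed e) (Some ((w, es), g, b)) =
     (if r e = w then (1, Some ((s e, e # es), g, b)) else (0, Some ((w, es), g, b)))"
| "act1 (Ghost e) (Some ((w, es), g, b)) =
     (case es of [] \<Rightarrow> if w = s e then (c g (ae (-g) e),
          Some ((r e, []), phi g (ae (-g) e), (fst b, snd b @ [ae (-g) e])))
        else (0, Some ((w, es), g, b))
     | e' # es' \<Rightarrow> if e = e' then (1, Some ((r e, es'), g, b)) else (0, Some ((w, es), g, b)))"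
| "act1 (VG v h) (Some ((w, es), g, b)) =
     (if v = av h w then (pc h es, Some ((v, pe h es), pg h es + g, b)) else (0, Some ((w, es), g, b)))"

lemma av_swap: "av g x = y \<Longrightarrow> av (-g) y = x" by auto

definition step where "step x p = (fst p * fst (act1 x (snd p)), snd (act1 x (snd p)))"

fun run where
  "run [] p = p"
| "run (x # w) p = step x (run w p)"

lemma run_append: "run (u @ w) p = run u (run w p)" by (induction u) auto

definition scale :: "'l \<Rightarrow> 'l \<times> 'x \<Rightarrow> 'l \<times> 'x" where "scale b p = (b * fst p, snd p)"
definition eqv :: "'l \<times> 'x \<Rightarrow> 'l \<times> 'x \<Rightarrow> bool" where "eqv p q \<longleftrightarrow> (fst p = 0 \<and> fst q = 0) \<or> p = q"

lemma run_scale: "run w (scale b p) = scale b (run w p)"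
  by (induction w) (auto simp: step_def scale_def mult.assoc)

lemma run_zero: "fst p = 0 \<Longrightarrow> fst (run w p) = 0"
  by (induction w) (auto simp: step_def)

lemma run_eqv: "eqv p q \<Longrightarrow> eqv (run w p) (run w q)"
  unfolding eqv_def using run_zero by blast

lemma eqv_scale: "eqv p q \<Longrightarrow> eqv (scale b p) (scale b q)"
  unfolding eqv_def scale_def by auto

definition reach where "reach m = (case m of None \<Rightarrow> True | Some t \<Rightarrow> t \<in> basis_idx r s av)"

lemma reach_Some: "reach (Some ((w, es), g, (u, bs))) \<longleftrightarrow>
   is_path r s (w, es) \<and> is_path r s (u, bs) \<and> av g (prange r (u, bs)) = prange r (w, es)"
  unfolding reach_def basis_idx_def by simp

lemma prange_simp: "prange r (w, es) = (if es = [] then w else r (last es))"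
  unfolding prange_def by simp

lemma act1_reach: "reach m \<Longrightarrow> \<exists>t. snd (act1 x m) = Some t \<and> reach (Some t)"
proof (cases m)
  case None
  then show ?thesis
    by (cases x) (auto simp: reach_Some is_path_iff prange_simp)
next
  case (Some t)
  obtain w es g u bs where t: "t = ((w, es), g, (u, bs))" by (metis prod.exhaust)
  assume "reach m"
  then have R: "is_path r s (w, es)" "is_path r s (u, bs)" "av g (prange r (u, bs)) = prange r (w, es)"
    using Some t reach_Some by auto
  show ?thesis
  proof (cases x)
    case (Ed e)
    then show ?thesis using Some t R
      by (cases es) (auto simp: reach_Some is_path_iff prange_simp)
  next
    case (Ghost e)
    show ?thesis
    proof (cases es)
      case Nil
      have "is_path r s (u, bs @ [ae (- g) e])" if "w = s e"
        using R Nil that by (auto simp: is_path_iff prange_simp chain_snoc hd_append dest: av_swap split: if_splits)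
      moreover have "av (phi g (ae (- g) e)) (prange r (u, bs @ [ae (- g) e])) = r e"
        by (simp add: prange_simp)
      ultimately show ?thesis using Some t R Nil Ghost
        by (auto simp: reach_Some prange_simp is_path_iff)
    next
      case (Cons e1 es1)
      then show ?thesis using Some t R Ghost
        by (cases es1) (auto simp: reach_Some is_path_iff prange_simp)
    qed
  next
    case (VG v h)
    have "is_path r s (v, pe h es)" if "v = av h w"
      using R that by (auto simp: is_path_iff hd_pe chain_pe)
    moreover have "av (pg h es + g) (prange r (u, bs)) = prange r (v, pe h es)" if "v = av h w"
      using R that by (auto simp: av_add prange_simp last_pe)
    ultimately show ?thesis using Some t R VG
      by (auto simp: reach_Some)
  qed
qed

end

context tep begin

lemma reach_cases:
  assumes "reach m"
  obtains "m = None"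
  | w es g u bs where "m = Some ((w, es), g, (u, bs))" "is_path r s (w, es)" "is_path r s (u, bs)"
      "av g (prange r (u, bs)) = prange r (w, es)"
proof (cases m)
  case None then show ?thesis using that by simp
next
  case (Some t)
  obtain w es g u bs where t: "t = ((w, es), g, (u, bs))" by (metis prod.exhaust)
  then show ?thesis using that Some assms reach_Some by auto
qed

lemma av_diff: "av (a - b) x = av a (av (-b) x)" by (simp add: av_add[symmetric])
lemma ae_diff: "ae (a - b) x = ae a (ae (-b) x)" by (simp add: ae_add[symmetric])

lemma av_phi_inv[simp]: "av (- phi g e) (av g x) = x" by (metis av_inv2 av_phi)

lemmas sim = step_def scale_def eqv_def

lemma chk1: "reach m \<Longrightarrow> eqv (run [Ed e] (1, m)) (scale 1 (run [VG (s e) 0, Ed e, VG (r e) 0] (1, m)))"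
  by (erule reach_cases) (auto simp: sim)

lemma chk2: "reach m \<Longrightarrow> eqv (run [Ghost e] (1, m)) (scale 1 (run [VG (r e) 0, Ghost e, VG (s e) 0] (1, m)))"
  by (erule reach_cases) (auto simp: sim is_path_iff split: list.splits)

lemma chk3: "reach m \<Longrightarrow> eqv (run [Ghost e, Ed f] (1, m)) (scale (if e = f then 1 else 0) (run [VG (r e) 0] (1, m)))"
  by (erule reach_cases) (auto simp: sim)

lemma chk4: "reach m \<Longrightarrow> eqv (run [VG v g, VG w h] (1, m)) (scale (if v = av g w then 1 else 0) (run [VG v (g + h)] (1, m)))"
  by (erule reach_cases) (auto simp: sim minus_add av_add av_diff av_inj pe_add pg_add pc_add add.assoc)

lemma chk5: "reach m \<Longrightarrow> eqv (run [VG v g, Ed e] (1, m))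
   (scale (if v = av g (s e) then c g e else 0) (run [Ed (ae g e), VG (r (ae g e)) (phi g e)] (1, m)))"
  by (erule reach_cases) (auto simp: sim av_inj av_diff)

lemma chk6: "reach m \<Longrightarrow> eqv (run [Ghost e, VG v g] (1, m))
   (scale (if v = s e then c g (ae (-g) e) else 0) (run [VG (r e) (phi g (ae (-g) e)), Ghost (ae (-g) e)] (1, m)))"
proof (erule reach_cases)
  assume "m = None"
  then show ?thesis by (auto simp: sim)
next
  fix w es k u bs
  assume m: "m = Some ((w, es), k, u, bs)" and R: "is_path r s (w, es)" "is_path r s (u, bs)"
      "av k (prange r (u, bs)) = prange r (w, es)"
  show ?thesis
  proof (cases es)
    case Nil
    define e0 where "e0 = ae (-g) e"
    have 1: "ae (-(g+k)) e = ae (-k) e0" unfolding e0_def by (simp add: minus_add ae_diff)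
    have 2: "phi (g + k) (ae (-k) e0) = phi g e0 + phi k (ae (-k) e0)" by (simp add: phi_add)
    have 3: "c (g + k) (ae (-k) e0) = c g e0 * c k (ae (-k) e0)" by (simp add: c_add)
    have 4: "r e = av (phi g e0) (r e0)" unfolding e0_def by simp
    have 5: "(v = av g w \<and> v = s e) \<longleftrightarrow> (v = s e \<and> w = s e0)" unfolding e0_def by (auto dest: av_swap)
    show ?thesis using m Nil 1 2 3 4 5 unfolding e0_def[symmetric] by (auto simp: sim)
  next
    case (Cons e1 es1)
    define e0 where "e0 = ae (-g) e"
    have w: "w = s e1" using R(1) Cons by (simp add: is_path_iff)
    have 4: "r e = av (phi g e0) (r e0)" unfolding e0_def by simp
    have 5: "(v = av g w \<and> e = ae g e1) \<longleftrightarrow> (v = s e \<and> e0 = e1)" unfolding e0_def w by auto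
    show ?thesis using m Cons w 4 5 unfolding e0_def[symmetric] by (auto simp: sim)
  qed
qed

end

lemma if_wd: "(if P then Defs.mono 1 w else fzero) = Defs.mono (if P then 1 else 0) w"
  by (auto simp: mono_zero)
lemma if_wd2: "(if P then fsmult a (Defs.mono 1 w) else fzero) = Defs.mono (if P then a else 0) w"
  by (auto simp: mono_zero fsmult_mono)

lemma sum_superset: fixes x :: "'a \<Rightarrow> 'l::comm_ring_1" shows "finite S \<Longrightarrow> {w. x w \<noteq> 0} \<subseteq> S \<Longrightarrow>
    (\<Sum>w\<in>{w. x w \<noteq> 0}. x w * f w) = (\<Sum>w\<in>S. x w * f w)"
  by (rule sum.mono_neutral_left) auto

lemma sum_mono_delta: fixes f :: "_ \<Rightarrow> 'l::comm_ring_1"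
  shows "finite S \<Longrightarrow> u \<in> S \<Longrightarrow> (\<Sum>w\<in>S. Defs.mono a u w * f w) = a * f u"
proof -
  assume "finite S" "u \<in> S"
  have "(\<Sum>w\<in>S. Defs.mono a u w * f w) = (\<Sum>w\<in>S. if w = u then a * f u else 0)"
    by (rule sum.cong) (auto simp: Defs.mono_def)
  then show ?thesis using \<open>finite S\<close> \<open>u \<in> S\<close> by (simp add: sum.delta')
qed

context tep begin

lemma relator_form: "x \<in> cohn_relators r s av ae phi c \<Longrightarrow> \<exists>w1 b w2. x = fdiff (Defs.mono 1 w1) (Defs.mono b w2) \<and>
    (\<forall>m. reach m \<longrightarrow> eqv (run w1 (1, m)) (scale b (run w2 (1, m))))"
proof (induction rule: cohn_relators.induct)
  case (rel1 e) then show ?case using chk1 by blast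
next
  case (rel2 e) then show ?case using chk2 by blast
next
  case (rel3 e f) then show ?case unfolding if_wd using chk3 by blast
next
  case (rel4 v g w h) then show ?case unfolding if_wd using chk4 by blast
next
  case (rel5 v g e) then show ?case unfolding if_wd2 using chk5 by blast
next
  case (rel6 e v g) then show ?case unfolding if_wd2 using chk6 by blast
qed

definition coef where "coef p t = (case snd p of Some t' \<Rightarrow> if t' = t then fst p else 0 | None \<Rightarrow> 0)"
definition nf where "nf w = run w (1, None)"

lemma reach_run: "reach (snd p) \<Longrightarrow> reach (snd (run w p))"
proof (induction w)
  case (Cons x w)
  then show ?case using act1_reach[of "snd (run w p)" x] by (auto simp: step_def)
qed simp

lemma coef_eqv: "eqv p q \<Longrightarrow> coef p t = coef q t"
  unfolding eqv_def coef_def by (auto split: option.splits)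
lemma coef_scale: "coef (scale b p) t = b * coef p t"
  unfolding scale_def coef_def by (auto split: option.splits)

lemma rel_coef:
  assumes "\<forall>m. reach m \<longrightarrow> eqv (run w1 (1, m)) (scale b (run w2 (1, m)))"
  shows "coef (nf (u @ w1 @ v)) t = b * coef (nf (u @ w2 @ v)) t"
proof -
  obtain a0 m0 where p: "run v (1, None) = (a0, m0)" by (metis prod.exhaust)
  have rm: "reach m0" using reach_run[of "(1, None)" v] p by (simp add: reach_def)
  have sc: "(a0, m0) = scale a0 (1, m0)" by (simp add: scale_def)
  have "nf (u @ w1 @ v) = run u (scale a0 (run w1 (1, m0)))"
    unfolding nf_def run_append p by (subst sc) (simp only: run_scale)
  moreover have "nf (u @ w2 @ v) = run u (scale a0 (run w2 (1, m0)))"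
    unfolding nf_def run_append p by (subst sc) (simp only: run_scale)
  moreover have "eqv (run u (scale a0 (run w1 (1, m0)))) (run u (scale a0 (scale b (run w2 (1, m0)))))"
    using assms rm by (intro run_eqv eqv_scale) auto
  moreover have "scale a0 (scale b q) = scale b (scale a0 q)" for q :: "'l \<times> 'x"
    by (simp add: scale_def algebra_simps)
  ultimately show ?thesis using coef_eqv by (metis coef_scale run_scale)
qed

definition Qp :: "('v,'e,'g,'l) falg \<Rightarrow> bool" where
  "Qp x \<longleftrightarrow> finite {w. x w \<noteq> 0} \<and>
     (\<forall>u v t. (\<Sum>w\<in>{w. x w \<noteq> 0}. x w * coef (nf (u @ w @ v)) t) = 0)"

lemma Qp_ideal: "x \<in> ideal_gen (cohn_relators r s av ae phi c) \<Longrightarrow> Qp x"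
proof (induction rule: ideal_gen.induct)
  case (gen x)
  then obtain w1 b w2 where x: "x = fdiff (Defs.mono 1 w1) (Defs.mono b w2)"
    and H: "\<forall>m. reach m \<longrightarrow> eqv (run w1 (1, m)) (scale b (run w2 (1, m)))"
    using relator_form by blast
  have sub: "{w. x w \<noteq> 0} \<subseteq> {w1, w2}" unfolding x by (auto simp: fdiff_def Defs.mono_def)
  show ?case unfolding Qp_def
  proof (intro conjI allI)
    show "finite {w. x w \<noteq> 0}" using sub finite_subset by blast
    fix u v t
    let ?f = "\<lambda>w. coef (nf (u @ w @ v)) t"
    have "(\<Sum>w\<in>{w. x w \<noteq> 0}. x w * ?f w) = (\<Sum>w\<in>{w1, w2}. x w * ?f w)"
      by (rule sum_superset[OF _ sub]) simp
    also have "\<dots> = (\<Sum>w\<in>{w1, w2}. Defs.mono 1 w1 w * ?f w) - (\<Sum>w\<in>{w1, w2}. Defs.mono b w2 w * ?f w)"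
      unfolding x fdiff_def by (simp add: left_diff_distrib sum_subtractf)
    also have "\<dots> = ?f w1 - b * ?f w2" by (simp add: sum_mono_delta)
    also have "\<dots> = 0" using rel_coef[OF H] by simp
    finally show "(\<Sum>w\<in>{w. x w \<noteq> 0}. x w * ?f w) = 0" .
  qed
next
  case zero
  then show ?case unfolding Qp_def by (simp add: fzero_def)
next
  case (add x y)
  have sub: "{w. fadd x y w \<noteq> 0} \<subseteq> {w. x w \<noteq> 0} \<union> {w. y w \<noteq> 0}" by (auto simp: fadd_def)
  have fin: "finite ({w. x w \<noteq> 0} \<union> {w. y w \<noteq> 0})" using add.IH unfolding Qp_def by simp
  show ?case unfolding Qp_def
  proof (intro conjI allI)
    show "finite {w. fadd x y w \<noteq> 0}" using sub fin finite_subset by blast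
    fix u v t
    let ?f = "\<lambda>w. coef (nf (u @ w @ v)) t"
    let ?S = "{w. x w \<noteq> 0} \<union> {w. y w \<noteq> 0}"
    have "(\<Sum>w\<in>{w. fadd x y w \<noteq> 0}. fadd x y w * ?f w) = (\<Sum>w\<in>?S. fadd x y w * ?f w)"
      by (rule sum_superset[OF fin sub])
    also have "\<dots> = (\<Sum>w\<in>?S. x w * ?f w) + (\<Sum>w\<in>?S. y w * ?f w)"
      by (simp add: fadd_def distrib_right sum.distrib)
    also have "(\<Sum>w\<in>?S. x w * ?f w) = (\<Sum>w\<in>{w. x w \<noteq> 0}. x w * ?f w)"
      by (rule sum_superset[symmetric]) (use fin in auto)
    also have "(\<Sum>w\<in>?S. y w * ?f w) = (\<Sum>w\<in>{w. y w \<noteq> 0}. y w * ?f w)"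
      by (rule sum_superset[symmetric]) (use fin in auto)
    finally show "(\<Sum>w\<in>{w. fadd x y w \<noteq> 0}. fadd x y w * ?f w) = 0"
      using add.IH unfolding Qp_def by simp
  qed
next
  case (mul x a u v)
  let ?x = "fmul (fmul (Defs.mono a u) x) (Defs.mono 1 v)"
  have xsw: "?x = sw a u x v" unfolding sw_def ..
  let ?g = "\<lambda>w. u @ w @ v"
  have fin: "finite {w. x w \<noteq> 0}" using mul.IH unfolding Qp_def by simp
  have sub: "{w. ?x w \<noteq> 0} \<subseteq> ?g ` {w. x w \<noteq> 0}"
  proof
    fix w' assume "w' \<in> {w. ?x w \<noteq> 0}"
    then have nz: "sw a u x v w' \<noteq> 0" using xsw by simp
    then obtain w where w: "w' = u @ w @ v" using sw_notin by blast
    then have "x w \<noteq> 0" using nz by (metis mult_zero_right sw_app)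
    then show "w' \<in> ?g ` {w. x w \<noteq> 0}" using w by blast
  qed
  have fin2: "finite (?g ` {w. x w \<noteq> 0})" using fin by simp
  have inj: "inj_on ?g {w. x w \<noteq> 0}" by (auto simp: inj_on_def)
  show ?case unfolding Qp_def
  proof (intro conjI allI)
    show "finite {w. ?x w \<noteq> 0}" using sub fin2 finite_subset by blast
    fix u' v' t
    let ?f = "\<lambda>w. coef (nf (u' @ w @ v')) t"
    have "(\<Sum>w\<in>{w. ?x w \<noteq> 0}. ?x w * ?f w) = (\<Sum>w\<in>?g ` {w. x w \<noteq> 0}. ?x w * ?f w)"
      by (rule sum_superset[OF fin2 sub])
    also have "\<dots> = (\<Sum>w\<in>{w. x w \<noteq> 0}. ?x (?g w) * ?f (?g w))"
      by (rule sum.reindex[OF inj, unfolded comp_def])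
    also have "\<dots> = a * (\<Sum>w\<in>{w. x w \<noteq> 0}. x w * coef (nf ((u' @ u) @ w @ (v @ v'))) t)"
      unfolding xsw sw_app by (simp add: sum_distrib_left mult.assoc)
    also have "(\<Sum>w\<in>{w. x w \<noteq> 0}. x w * coef (nf ((u' @ u) @ w @ (v @ v'))) t) = 0"
      using mul.IH unfolding Qp_def by blast
    finally show "(\<Sum>w\<in>{w. ?x w \<noteq> 0}. ?x w * ?f w) = 0" by simp
  qed
qed

end

context tep begin

definition W :: "('v,'e) path \<times> 'g \<times> ('v,'e) path \<Rightarrow> ('v,'e,'g) cgen list" where
  "W t = (case t of (a, g, b) \<Rightarrow> pword a @ [VG (prange r a) g] @ pword_star b)"

lemma basis_elt_W: "basis_elt r t = Defs.mono 1 (W t)"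
  unfolding basis_elt_def W_def by (auto simp: sw_def[symmetric] sw_mono split: prod.splits)

lemma run_ghosts: "chain bs \<Longrightarrow> bs \<noteq> [] \<Longrightarrow>
   run (rev (map Ghost bs)) (1, None) = (1, Some ((r (last bs), []), 0, (s (hd bs), bs)))"
proof (induction bs rule: rev_induct)
  case (snoc e bs)
  show ?case
  proof (cases "bs = []")
    case True then show ?thesis by (simp add: step_def)
  next
    case False
    then have "chain bs" "r (last bs) = s e" using snoc.prems chain_snoc by auto
    then show ?thesis using snoc.IH False by (simp add: step_def)
  qed
qed simp

lemma run_star: "is_path r s b \<Longrightarrow> run (pword_star b) (1, None) = (1, Some ((prange r b, []), 0, b))"
proof (cases b)
  case (Pair u bs)
  assume "is_path r s b"
  then show ?thesis using Pair run_ghosts[of bs]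
    by (auto simp: pword_star_def prange_simp is_path_iff step_def)
qed

lemma run_Ed: "chain es \<Longrightarrow> es \<noteq> [] \<Longrightarrow>
   run (map Ed es) (1, Some ((r (last es), []), g, b)) = (1, Some ((s (hd es), es), g, b))"
proof (induction es rule: chain.induct)
  case (2 e) then show ?case by (simp add: step_def)
next
  case (3 e1 e2 es) then show ?case by (simp add: step_def)
qed simp_all

lemma nf_W: "t \<in> basis_idx r s av \<Longrightarrow> nf (W t) = (1, Some t)"
proof -
  assume t: "t \<in> basis_idx r s av"
  obtain w es g b where tt: "t = ((w, es), g, b)" by (metis prod.exhaust)
  have R: "is_path r s (w, es)" "is_path r s b" "av g (prange r b) = prange r (w, es)"
    using t tt unfolding basis_idx_def by auto
  have 1: "run (pword_star b) (1, None) = (1, Some ((prange r b, []), 0, b))" using run_star R by simp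
  have 2: "run [VG (prange r (w, es)) g] (1, Some ((prange r b, []), 0, b)) = (1, Some ((prange r (w, es), []), g, b))"
    using R by (simp add: step_def)
  have 3: "run (pword (w, es)) (1, Some ((prange r (w, es), []), g, b)) = (1, Some ((w, es), g, b))"
  proof (cases "es = []")
    case True then show ?thesis by (simp add: pword_def prange_simp step_def)
  next
    case False
    then show ?thesis using R run_Ed[of es g b] by (simp add: pword_def prange_simp is_path_iff)
  qed
  show ?thesis unfolding nf_def W_def tt using 1 2 3 by (simp add: run_append)
qed

lemma lincomb_supp: "finite K \<Longrightarrow> {t. k t \<noteq> 0} \<subseteq> K \<Longrightarrow>
  lincomb r k = (\<lambda>w. \<Sum>t\<in>K. k t * Defs.mono 1 (W t) w)"
  unfolding lincomb_def basis_elt_W by (intro ext sum.mono_neutral_left) auto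

lemma part2:
  assumes fin: "finite {t. k t \<noteq> 0}" and sub: "{t. k t \<noteq> 0} \<subseteq> basis_idx r s av"
    and I: "lincomb r k \<in> cohn_ideal r s av ae phi c"
  shows "k t = 0"
proof -
  let ?K = "{t. k t \<noteq> 0}"
  let ?L = "lincomb r k"
  let ?S = "W ` ?K"
  have Q: "Qp ?L" using I Qp_ideal unfolding cohn_ideal_def by blast
  have L: "?L = (\<lambda>w. \<Sum>t\<in>?K. k t * Defs.mono 1 (W t) w)" using lincomb_supp[OF fin order_refl] .
  have finS: "finite ?S" using fin by simp
  have supS: "{w. ?L w \<noteq> 0} \<subseteq> ?S"
  proof
    fix w assume "w \<in> {w. ?L w \<noteq> 0}"
    then have "(\<Sum>t\<in>?K. k t * Defs.mono 1 (W t) w) \<noteq> 0" using L by simp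
    then obtain t where "t \<in> ?K" "k t * Defs.mono 1 (W t) w \<noteq> 0" by (meson sum.neutral)
    then show "w \<in> ?S" by (auto simp: Defs.mono_def split: if_splits)
  qed
  have "0 = (\<Sum>w\<in>{w. ?L w \<noteq> 0}. ?L w * coef (nf ([] @ w @ [])) t)"
    using Q unfolding Qp_def by metis
  also have "\<dots> = (\<Sum>w\<in>?S. ?L w * coef (nf w) t)"
    using sum_superset[OF finS supS] by simp
  also have "\<dots> = (\<Sum>w\<in>?S. \<Sum>t'\<in>?K. k t' * (Defs.mono 1 (W t') w * coef (nf w) t))"
    unfolding L by (simp add: sum_distrib_right mult.assoc)
  also have "\<dots> = (\<Sum>t'\<in>?K. k t' * (\<Sum>w\<in>?S. Defs.mono 1 (W t') w * coef (nf w) t))"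
    by (subst sum.swap) (simp add: sum_distrib_left)
  also have "\<dots> = (\<Sum>t'\<in>?K. k t' * coef (nf (W t')) t)"
    by (rule sum.cong) (auto simp: sum_mono_delta finS)
  also have "\<dots> = (\<Sum>t'\<in>?K. if t' = t then k t' else 0)"
    by (rule sum.cong) (use sub nf_W in \<open>auto simp: coef_def\<close>)
  also have "\<dots> = k t" using fin by (simp add: sum.delta)
  finally show ?thesis by simp
qed

end

context tep begin

abbreviation cwr where "cwr \<equiv> cw (cohn_relators r s av ae phi c)"

lemma r1: "cwr [Ed e] 1 [VG (s e) 0, Ed e, VG (r e) 0]"
  by (rule cw_gen) (rule rel1)
lemma r2: "cwr [Ghost e] 1 [VG (r e) 0, Ghost e, VG (s e) 0]"
  by (rule cw_gen) (rule rel2)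
lemma r3: "cwr [Ghost e, Ed f] (if e = f then 1 else 0) [VG (r e) 0]"
  by (rule cw_gen, rule rel3[unfolded if_wd])
lemma r4: "cwr [VG v g, VG w h] (if v = av g w then 1 else 0) [VG v (g + h)]"
  by (rule cw_gen, rule rel4[unfolded if_wd])
lemma r5: "cwr [VG v g, Ed e] (if v = av g (s e) then c g e else 0) [Ed (ae g e), VG (r (ae g e)) (phi g e)]"
  by (rule cw_gen, rule rel5[unfolded if_wd2])
lemma r6: "cwr [Ghost e, VG v g] (if v = s e then c g (ae (-g) e) else 0)
     [VG (r e) (phi g (ae (-g) e)), Ghost (ae (-g) e)]"
  by (rule cw_gen, rule rel6[unfolded if_wd2])

lemma D1: "cwr [VG v 0, VG v 0] 1 [VG v 0]"
  using r4[of v 0 v 0] by simp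
lemma D2: "cwr [VG v 0, VG v h] 1 [VG v h]"
  using r4[of v 0 v h] by simp

lemma E1: "cwr [Ed e, VG (r e) 0] 1 [Ed e]"
proof -
  have a: "cwr [Ed e, VG (r e) 0] 1 [VG (s e) 0, Ed e, VG (r e) 0, VG (r e) 0]"
    using cw_ctxr[OF r1[of e], of "[VG (r e) 0]"] by simp
  have b: "cwr [VG (s e) 0, Ed e, VG (r e) 0, VG (r e) 0] 1 [VG (s e) 0, Ed e, VG (r e) 0]"
    using cw_ctxl[OF D1[of "r e"], of "[VG (s e) 0, Ed e]"] by simp
  show ?thesis using cw_trans1[OF a cw_trans1[OF b cw_sym1[OF r1]]] .
qed

lemma E2: "cwr [VG (s e) 0, Ed e] 1 [Ed e]"
proof -
  have a: "cwr [VG (s e) 0, Ed e] 1 [VG (s e) 0, VG (s e) 0, Ed e, VG (r e) 0]"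
    using cw_ctxl[OF r1[of e], of "[VG (s e) 0]"] by simp
  have b: "cwr [VG (s e) 0, VG (s e) 0, Ed e, VG (r e) 0] 1 [VG (s e) 0, Ed e, VG (r e) 0]"
    using cw_ctxr[OF D1[of "s e"], of "[Ed e, VG (r e) 0]"] by simp
  show ?thesis using cw_trans1[OF a cw_trans1[OF b cw_sym1[OF r1]]] .
qed

lemma G1: "cwr [Ghost e, VG (s e) 0] 1 [Ghost e]"
proof -
  have a: "cwr [Ghost e, VG (s e) 0] 1 [VG (r e) 0, Ghost e, VG (s e) 0, VG (s e) 0]"
    using cw_ctxr[OF r2[of e], of "[VG (s e) 0]"] by simp
  have b: "cwr [VG (r e) 0, Ghost e, VG (s e) 0, VG (s e) 0] 1 [VG (r e) 0, Ghost e, VG (s e) 0]"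
    using cw_ctxl[OF D1[of "s e"], of "[VG (r e) 0, Ghost e]"] by simp
  show ?thesis using cw_trans1[OF a cw_trans1[OF b cw_sym1[OF r2]]] .
qed

lemma G2: "cwr [VG (r e) 0, Ghost e] 1 [Ghost e]"
proof -
  have a: "cwr [VG (r e) 0, Ghost e] 1 [VG (r e) 0, VG (r e) 0, Ghost e, VG (s e) 0]"
    using cw_ctxl[OF r2[of e], of "[VG (r e) 0]"] by simp
  have b: "cwr [VG (r e) 0, VG (r e) 0, Ghost e, VG (s e) 0] 1 [VG (r e) 0, Ghost e, VG (s e) 0]"
    using cw_ctxr[OF D1[of "r e"], of "[Ghost e, VG (s e) 0]"] by simp
  show ?thesis using cw_trans1[OF a cw_trans1[OF b cw_sym1[OF r2]]] .
qed

lemma Z1: "r e \<noteq> w \<Longrightarrow> cwr [Ed e, VG w 0] 0 X"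
proof -
  assume h: "r e \<noteq> w"
  have a: "cwr [Ed e, VG w 0] 1 [Ed e, VG (r e) 0, VG w 0]"
    using cw_ctxr[OF cw_sym1[OF E1[of e]], of "[VG w 0]"] by simp
  have b: "cwr [Ed e, VG (r e) 0, VG w 0] 0 X"
    using cw_zero[of _ "[VG (r e) 0, VG w 0]" _ "[Ed e]" "[]"] r4[of "r e" 0 w 0] h by simp
  show ?thesis using cw_trans[OF a b] by simp
qed

lemma Z2: "r e \<noteq> s f \<Longrightarrow> cwr [Ed e, Ed f] 0 X"
proof -
  assume h: "r e \<noteq> s f"
  have a: "cwr [Ed e, Ed f] 1 [Ed e, VG (r e) 0, Ed f]"
    using cw_ctxr[OF cw_sym1[OF E1[of e]], of "[Ed f]"] by simp
  have b: "cwr [Ed e, VG (r e) 0, Ed f] 1 [Ed e, VG (r e) 0, VG (s f) 0, Ed f]"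
    using cw_ctxl[OF cw_sym1[OF E2[of f]], of "[Ed e, VG (r e) 0]"] by simp
  have z: "cwr [Ed e, VG (r e) 0, VG (s f) 0, Ed f] 0 X"
    using cw_zero[of _ "[VG (r e) 0, VG (s f) 0]" _ "[Ed e]" "[Ed f]"] r4[of "r e" 0 "s f" 0] h by simp
  show ?thesis using cw_trans1[OF a cw_trans[OF b z]] by simp
qed

lemma push: "chain es \<Longrightarrow> es \<noteq> [] \<Longrightarrow> v = av h (s (hd es)) \<Longrightarrow>
   cwr (VG v h # map Ed es) (pc h es) (map Ed (pe h es) @ [VG (r (last (pe h es))) (pg h es)])"
proof (induction es arbitrary: v h rule: chain.induct)
  case (2 e)
  then show ?case using r5[of v h e] by simp
next
  case (3 e1 e2 es)
  let ?h = "phi h e1"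
  have a: "cwr (VG v h # map Ed (e1 # e2 # es)) (c h e1) (Ed (ae h e1) # VG (r (ae h e1)) ?h # map Ed (e2 # es))"
    using cw_ctxr[OF r5[of v h e1], of "map Ed (e2 # es)"] 3(2,4) by simp
  have b0: "cwr (VG (r (ae h e1)) ?h # map Ed (e2 # es)) (pc ?h (e2 # es))
      (map Ed (pe ?h (e2 # es)) @ [VG (r (last (pe ?h (e2 # es)))) (pg ?h (e2 # es))])"
    by (rule "3.IH") (use "3.prems" in auto)
  have b: "cwr (Ed (ae h e1) # VG (r (ae h e1)) ?h # map Ed (e2 # es)) (pc ?h (e2 # es))
      (Ed (ae h e1) # map Ed (pe ?h (e2 # es)) @ [VG (r (last (pe ?h (e2 # es)))) (pg ?h (e2 # es))])"
    using cw_cons[OF b0] by simp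
  have e: "pe h (e1 # e2 # es) = ae h e1 # pe ?h (e2 # es)" "pg h (e1 # e2 # es) = pg ?h (e2 # es)"
     "pc h (e1 # e2 # es) = c h e1 * pc ?h (e2 # es)" "last (pe h (e1 # e2 # es)) = last (pe ?h (e2 # es))"
    by simp_all
  show ?case unfolding e using cw_trans[OF a b] by simp
qed simp_all

end

context tep begin

lemma W_simp: "W ((w, es), g, b) = pword (w, es) @ [VG (prange r (w, es)) g] @ pword_star b"
  unfolding W_def by simp

lemma span_None: "act1 x None = (a, Some t') \<Longrightarrow> cwr [x] a (W t')"
proof (cases x)
  case (Ed e)
  assume h: "act1 x None = (a, Some t')"
  have "cwr [Ed e] 1 [Ed e, VG (r e) 0]" by (rule cw_sym1[OF E1])
  moreover have "cwr [Ed e, VG (r e) 0] 1 [Ed e, VG (r e) 0, VG (r e) 0]"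
    using cw_ctxl[OF cw_sym1[OF D1[of "r e"]], of "[Ed e]"] by simp
  ultimately show ?thesis using h Ed cw_trans1 by (auto simp: W_simp pword_def pword_star_def prange_simp)
next
  case (Ghost e)
  assume h: "act1 x None = (a, Some t')"
  have "cwr [Ghost e] 1 [VG (r e) 0, Ghost e]" by (rule cw_sym1[OF G2])
  moreover have "cwr [VG (r e) 0, Ghost e] 1 [VG (r e) 0, VG (r e) 0, Ghost e]"
    using cw_ctxr[OF cw_sym1[OF D1[of "r e"]], of "[Ghost e]"] by simp
  ultimately show ?thesis using h Ghost cw_trans1 by (auto simp: W_simp pword_def pword_star_def prange_simp)
next
  case (VG v h)
  assume hh: "act1 x None = (a, Some t')"
  have "cwr [VG v h] 1 [VG v h, VG (av (-h) v) 0]"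
    using r4[of v h "av (-h) v" 0] by (simp add: cw_sym1)
  moreover have "cwr [VG v h, VG (av (-h) v) 0] 1 [VG v 0, VG v h, VG (av (-h) v) 0]"
    using cw_ctxr[OF cw_sym1[OF D2[of v h]], of "[VG (av (-h) v) 0]"] by simp
  ultimately show ?thesis using hh VG cw_trans1 by (auto simp: W_simp pword_def pword_star_def prange_simp)
qed

lemma span_Ed:
  assumes R: "is_path r s (w, es)" and h: "act1 (Ed e) (Some ((w, es), g, b)) = (a, Some t')"
  shows "cwr (Ed e # W ((w, es), g, b)) a (W t')"
proof (cases es)
  case Nil
  show ?thesis
  proof (cases "r e = w")
    case True
    have "cwr ([Ed e, VG (r e) 0] @ VG w g # pword_star b) 1 ([Ed e] @ VG w g # pword_star b)"
      by (rule cw_ctxr[OF E1])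
    then show ?thesis using h Nil True by (auto simp: W_simp pword_def prange_simp)
  next
    case False
    have "cwr ([] @ [Ed e, VG w 0] @ VG w g # pword_star b) 0 (W t')"
      by (rule cw_zero[OF Z1[OF False]])
    then show ?thesis using h Nil False by (auto simp: W_simp pword_def prange_simp)
  qed
next
  case (Cons e1 es1)
  have w: "w = s e1" using R Cons by (simp add: is_path_iff)
  show ?thesis
  proof (cases "r e = w")
    case True
    then show ?thesis using h Cons by (auto simp: W_simp pword_def prange_simp cw_refl)
  next
    case False
    have "cwr ([] @ [Ed e, Ed e1] @ map Ed es1 @ VG (prange r (w, es)) g # pword_star b) 0 (W t')"
      by (rule cw_zero[OF Z2]) (use False w in simp)
    then show ?thesis using h Cons False by (auto simp: W_simp pword_def)
  qed
qed

lemma span_Ghost: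
  assumes R: "is_path r s (w, es)" "is_path r s (u, bs)" "av g (prange r (u, bs)) = prange r (w, es)"
    and h: "act1 (Ghost e) (Some ((w, es), g, (u, bs))) = (a, Some t')"
  shows "cwr (Ghost e # W ((w, es), g, (u, bs))) a (W t')"
proof (cases es)
  case Nil
  let ?B = "pword_star (u, bs)"
  show ?thesis
  proof (cases "w = s e")
    case True
    define e0 where "e0 = ae (-g) e"
    define ph where "ph = phi g e0"
    let ?B' = "rev (map Ghost bs)"
    have at: "a = c g e0" "t' = ((r e, []), ph, (u, bs @ [e0]))"
      using h Nil True unfolding e0_def ph_def by auto
    have s1: "cwr (Ghost e # VG w 0 # VG w g # ?B) 1 (Ghost e # VG w g # ?B)"
      using cw_ctxr[OF G1[of e], of "VG w g # ?B"] True by simp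
    have s2: "cwr (Ghost e # VG w g # ?B) (c g e0) (VG (r e) ph # Ghost e0 # ?B)"
      using cw_ctxr[OF r6[of e w g], of "?B"] True unfolding e0_def ph_def by simp
    have s3: "cwr (VG (r e) ph # Ghost e0 # ?B) 1 (VG (r e) ph # Ghost e0 # ?B')"
    proof (cases "bs = []")
      case True
      have "u = s e0" using R(3) \<open>w = s e\<close> Nil True unfolding e0_def by (auto simp: prange_simp dest: av_swap)
      then show ?thesis using cw_ctxl[OF G1[of e0], of "[VG (r e) ph]"] True by (simp add: pword_star_def)
    next
      case False
      then show ?thesis by (simp add: pword_star_def cw_refl)
    qed
    have s4: "cwr (VG (r e) ph # Ghost e0 # ?B') 1 (VG (r e) 0 # VG (r e) ph # Ghost e0 # ?B')"
      using cw_ctxr[OF cw_sym1[OF D2[of "r e" ph]], of "Ghost e0 # ?B'"] by simp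
    have "cwr (Ghost e # VG w 0 # VG w g # ?B) (c g e0) (VG (r e) 0 # VG (r e) ph # Ghost e0 # ?B')"
      using cw_trans1[OF s1 cw_trans1'[OF s2 cw_trans1[OF s3 s4]]] .
    then show ?thesis using at Nil by (simp add: W_simp pword_def pword_star_def prange_simp)
  next
    case False
    have "cwr ([] @ [Ghost e, VG w 0] @ VG w g # ?B) 0 (W t')"
      by (rule cw_zero) (use r6[of e w 0] False in simp)
    then show ?thesis using h Nil False by (auto simp: W_simp pword_def prange_simp)
  qed
next
  case (Cons e1 es1)
  let ?B = "pword_star (u, bs)"
  let ?pr = "prange r (w, es)"
  have w: "w = s e1" "chain es" using R Cons by (auto simp: is_path_iff)
  show ?thesis
  proof (cases "e = e1")
    case True
    have at: "a = 1" "t' = ((r e, es1), g, (u, bs))" using h Cons True by auto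
    have s1: "cwr (Ghost e # Ed e1 # map Ed es1 @ VG ?pr g # ?B) 1 (VG (r e) 0 # map Ed es1 @ VG ?pr g # ?B)"
      using cw_ctxr[OF r3[of e e], of "map Ed es1 @ VG ?pr g # ?B"] True by simp
    show ?thesis
    proof (cases es1)
      case Nil
      then show ?thesis using s1 at Cons True by (simp add: W_simp pword_def prange_simp)
    next
      case (Cons e2 es2)
      have re: "r e = s e2" using w(2) \<open>es = e1 # es1\<close> Cons True by simp
      have s2: "cwr (VG (r e) 0 # Ed e2 # map Ed es2 @ VG ?pr g # ?B) 1 (Ed e2 # map Ed es2 @ VG ?pr g # ?B)"
        using cw_ctxr[OF E2[of e2], of "map Ed es2 @ VG ?pr g # ?B"] re by simp
      have s1': "cwr (Ghost e # Ed e1 # map Ed es1 @ VG ?pr g # ?B) 1 (VG (r e) 0 # Ed e2 # map Ed es2 @ VG ?pr g # ?B)"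
        using s1 Cons by simp
      show ?thesis using cw_trans1[OF s1' s2] at Cons \<open>es = e1 # es1\<close> by (simp add: W_simp pword_def prange_simp)
    qed
  next
    case False
    have "cwr ([] @ [Ghost e, Ed e1] @ map Ed es1 @ VG ?pr g # ?B) 0 (W t')"
      by (rule cw_zero) (use r3[of e e1] False in simp)
    then show ?thesis using h Cons False by (auto simp: W_simp pword_def)
  qed
qed

lemma span_VG:
  assumes R: "is_path r s (w, es)"
    and hh: "act1 (VG v h) (Some ((w, es), g, b)) = (a, Some t')"
  shows "cwr (VG v h # W ((w, es), g, b)) a (W t')"
proof (cases "v = av h w")
  case True
  have at: "a = pc h es" "t' = ((v, pe h es), pg h es + g, b)" using hh True by auto
  let ?B = "pword_star b"
  show ?thesis
  proof (cases es)
    case Nil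
    have s1: "cwr (VG v h # VG w 0 # VG w g # ?B) 1 (VG v h # VG w g # ?B)"
      using cw_ctxr[OF r4[of v h w 0], of "VG w g # ?B"] True by simp
    have s2: "cwr (VG v h # VG w g # ?B) 1 (VG v (h + g) # ?B)"
      using cw_ctxr[OF r4[of v h w g], of "?B"] True by simp
    have s3: "cwr (VG v (h + g) # ?B) 1 (VG v 0 # VG v (h + g) # ?B)"
      using cw_ctxr[OF cw_sym1[OF D2[of v "h + g"]], of "?B"] by simp
    show ?thesis using cw_trans1[OF s1 cw_trans1[OF s2 s3]] at Nil
      by (simp add: W_simp pword_def prange_simp)
  next
    case (Cons e1 es1)
    have w: "w = s e1" "chain es" using R Cons by (auto simp: is_path_iff)
    let ?x = "r (last (pe h es))"
    have p: "cwr (VG v h # map Ed es) (pc h es) (map Ed (pe h es) @ [VG ?x (pg h es)])"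
      by (rule push) (use w True Cons in auto)
    have s1: "cwr (VG v h # map Ed es @ VG (r (last es)) g # ?B) (pc h es)
        (map Ed (pe h es) @ [VG ?x (pg h es)] @ VG (r (last es)) g # ?B)"
      using cw_ctxr[OF p, of "VG (r (last es)) g # ?B"] by simp
    have xe: "?x = av (pg h es) (r (last es))" using Cons by (simp add: last_pe)
    have s2: "cwr (map Ed (pe h es) @ [VG ?x (pg h es), VG (r (last es)) g] @ ?B) 1
        (map Ed (pe h es) @ [VG ?x (pg h es + g)] @ ?B)"
      using cw_ctx[OF r4[of ?x "pg h es" "r (last es)" g], of "map Ed (pe h es)" ?B] xe by simp
    have "cwr (VG v h # map Ed es @ VG (r (last es)) g # ?B) (pc h es)
        (map Ed (pe h es) @ [VG ?x (pg h es + g)] @ ?B)"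
      using cw_trans1'[OF s1[simplified] s2[simplified]] by simp
    then show ?thesis using at Cons by (simp add: W_simp pword_def prange_simp)
  qed
next
  case False
  have a0: "a = 0" "t' = ((w, es), g, b)" using hh False by auto
  show ?thesis
  proof (cases es)
    case Nil
    have "cwr ([] @ [VG v h, VG w 0] @ VG w g # pword_star b) 0 (W t')"
      by (rule cw_zero) (use r4[of v h w 0] False in simp)
    then show ?thesis using a0 Nil by (simp add: W_simp pword_def prange_simp)
  next
    case (Cons e1 es1)
    have w: "w = s e1" using R Cons by (auto simp: is_path_iff)
    have "cwr ([] @ [VG v h, Ed e1] @ map Ed es1 @ VG (prange r (w, es)) g # pword_star b) 0 (W t')"
      by (rule cw_zero) (use r5[of v h e1] False w in simp)
    then show ?thesis using a0 Cons by (simp add: W_simp pword_def)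
  qed
qed

lemma span_Some: "reach (Some t) \<Longrightarrow> act1 x (Some t) = (a, Some t') \<Longrightarrow> cwr (x # W t) a (W t')"
proof -
  assume re: "reach (Some t)" and h: "act1 x (Some t) = (a, Some t')"
  obtain w es g u bs where tt: "t = ((w, es), g, (u, bs))" by (metis prod.exhaust)
  have R: "is_path r s (w, es)" "is_path r s (u, bs)" "av g (prange r (u, bs)) = prange r (w, es)"
    using re tt reach_Some by auto
  show ?thesis
  proof (cases x)
    case (Ed e) then show ?thesis using span_Ed[OF R(1)] h tt by simp
  next
    case (Ghost e) then show ?thesis using span_Ghost[OF R] h tt by simp
  next
    case (VG v h') then show ?thesis using span_VG[OF R(1)] h tt by simp
  qed
qed

lemma span_word: "w \<noteq> [] \<Longrightarrow> \<exists>a t. nf w = (a, Some t) \<and> t \<in> basis_idx r s av \<and> cwr w a (W t)"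
proof (induction w)
  case Nil then show ?case by simp
next
  case (Cons x w)
  show ?case
  proof (cases "w = []")
    case True
    obtain t where t: "snd (act1 x None) = Some t" "reach (Some t)"
      using act1_reach[of None x] by (auto simp: reach_def)
    have "act1 x None = (fst (act1 x None), Some t)" using t by (metis prod.collapse)
    then have "cwr [x] (fst (act1 x None)) (W t)" by (rule span_None)
    moreover have "nf [x] = (fst (act1 x None), Some t)" using t by (simp add: nf_def step_def)
    ultimately show ?thesis using True t(2) by (auto simp: reach_def)
  next
    case False
    then obtain b t where IH: "nf w = (b, Some t)" "t \<in> basis_idx r s av" "cwr w b (W t)"
      using Cons.IH by blast
    obtain t' where t': "snd (act1 x (Some t)) = Some t'" "reach (Some t')"
      using act1_reach[of "Some t" x] IH(2) by (auto simp: reach_def)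
    let ?a = "fst (act1 x (Some t))"
    have "act1 x (Some t) = (?a, Some t')" using t' by (metis prod.collapse)
    then have "cwr (x # W t) ?a (W t')" using IH(2) by (intro span_Some) (auto simp: reach_def)
    then have "cwr (x # w) (b * ?a) (W t')" using cw_trans[OF cw_cons[OF IH(3)]] by blast
    moreover have "nf (x # w) = (b * ?a, Some t')" using IH(1) t' by (simp add: nf_def step_def)
    ultimately show ?thesis using t'(2) by (auto simp: reach_def)
  qed
qed

end

context tep begin
lemma part1:
  fixes x :: "('v,'e,'g,'l) falg"
  assumes fin: "finite {w. x w \<noteq> 0}" and x0: "x [] = 0"
  shows "\<exists>k. finite {t. k t \<noteq> 0} \<and> {t. k t \<noteq> 0} \<subseteq> basis_idx r s av \<and>
            fdiff x (lincomb r k) \<in> cohn_ideal r s av ae phi c"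
proof -
  let ?S = "{w. x w \<noteq> 0}"
  define A where "A w = fst (nf w)" for w
  define T where "T w = the (snd (nf w))" for w
  have sp: "T w \<in> basis_idx r s av \<and> cwr w (A w) (W (T w))" if "w \<in> ?S" for w
  proof -
    have "w \<noteq> []" using that x0 by auto
    then obtain a t where "nf w = (a, Some t)" "t \<in> basis_idx r s av" "cwr w a (W t)"
      using span_word by blast
    then show ?thesis unfolding A_def T_def by simp
  qed
  define k where "k t = (\<Sum>w\<in>{w. w \<in> ?S \<and> T w = t}. x w * A w)" for t
  have finT: "finite (T ` ?S)" using fin by simp
  have ksub: "{t. k t \<noteq> 0} \<subseteq> T ` ?S"
  proof
    fix t assume kt: "t \<in> {t. k t \<noteq> 0}"
    show "t \<in> T ` ?S"
    proof (rule ccontr)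
      assume "t \<notin> T ` ?S"
      then have "{w. w \<in> ?S \<and> T w = t} = {}" by auto
      then have "k t = 0" unfolding k_def by (simp only: sum.empty)
      then show False using kt by simp
    qed
  qed
  have kfin: "finite {t. k t \<noteq> 0}" using finite_subset[OF ksub finT] .
  have kB: "{t. k t \<noteq> 0} \<subseteq> basis_idx r s av" using ksub sp by auto
  have L: "lincomb r k = (\<lambda>w'. \<Sum>t\<in>T ` ?S. k t * Defs.mono 1 (W t) w')"
    by (rule lincomb_supp[OF finT ksub])
  have L2: "lincomb r k w' = (\<Sum>w\<in>?S. x w * A w * Defs.mono 1 (W (T w)) w')" for w'
  proof -
    have "lincomb r k w' = (\<Sum>t\<in>T ` ?S. \<Sum>w\<in>{w. w \<in> ?S \<and> T w = t}. x w * A w * Defs.mono 1 (W (T w)) w')"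
      unfolding L k_def sum_distrib_right by (intro sum.cong refl) auto
    also have "\<dots> = (\<Sum>w\<in>?S. x w * A w * Defs.mono 1 (W (T w)) w')"
      by (rule sum.group[OF fin finT]) simp
    finally show ?thesis .
  qed
  have X: "x w' = (\<Sum>w\<in>?S. x w * Defs.mono 1 w w')" for w'
  proof -
    have "(\<Sum>w\<in>?S. x w * Defs.mono 1 w w') = (\<Sum>w\<in>?S. if w = w' then x w' else 0)"
      by (rule sum.cong) (auto simp: Defs.mono_def)
    also have "\<dots> = x w'" using fin by (simp add: sum.delta')
    finally show ?thesis by simp
  qed
  have eq: "fdiff x (lincomb r k) = (\<lambda>w'. \<Sum>w\<in>?S. fsmult (x w) (fdiff (Defs.mono 1 w) (Defs.mono (A w) (W (T w)))) w')"
  proof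
    fix w'
    have "fdiff x (lincomb r k) w' = (\<Sum>w\<in>?S. x w * Defs.mono 1 w w') - (\<Sum>w\<in>?S. x w * A w * Defs.mono 1 (W (T w)) w')"
      unfolding fdiff_def L2 by (subst X) simp
    also have "\<dots> = (\<Sum>w\<in>?S. fsmult (x w) (fdiff (Defs.mono 1 w) (Defs.mono (A w) (W (T w)))) w')"
      unfolding sum_subtractf[symmetric]
      by (rule sum.cong) (auto simp: fsmult_def fdiff_def Defs.mono_def algebra_simps)
    finally show "fdiff x (lincomb r k) w' = (\<Sum>w\<in>?S. fsmult (x w) (fdiff (Defs.mono 1 w) (Defs.mono (A w) (W (T w)))) w')" .
  qed
  have "fdiff x (lincomb r k) \<in> ideal_gen (cohn_relators r s av ae phi c)"
    unfolding eq
  proof (rule I_sum[OF fin], intro ballI)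
    fix w assume "w \<in> ?S"
    then have "cwr w (A w) (W (T w))" using sp by blast
    then show "fsmult (x w) (fdiff (Defs.mono 1 w) (Defs.mono (A w) (W (T w)))) \<in> ideal_gen (cohn_relators r s av ae phi c)"
      unfolding cw_def cg_def by (rule I_smult)
  qed
  then show ?thesis using kfin kB unfolding cohn_ideal_def by blast
qed

end

theorem corollary3p2:
  fixes r s :: "'e \<Rightarrow> 'v" and av :: "'g::group_add \<Rightarrow> 'v \<Rightarrow> 'v" and ae :: "'g \<Rightarrow> 'e \<Rightarrow> 'e"
    and phi :: "'g \<Rightarrow> 'e \<Rightarrow> 'g" and c :: "'g \<Rightarrow> 'e \<Rightarrow> 'l::comm_ring_1"
  assumes "twisted_EP_tuple r s av ae phi c"
  shows "(\<forall>x :: ('v,'e,'g,'l) falg. finite {w. x w \<noteq> 0} \<and> x [] = 0 \<longrightarrow>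
            (\<exists>k. finite {t. k t \<noteq> 0} \<and> {t. k t \<noteq> 0} \<subseteq> basis_idx r s av \<and>
                 fdiff x (lincomb r k) \<in> cohn_ideal r s av ae phi c))
       \<and> (\<forall>k. finite {t. k t \<noteq> 0} \<and> {t. k t \<noteq> 0} \<subseteq> basis_idx r s av \<and>
                 lincomb r k \<in> cohn_ideal r s av ae phi c \<longrightarrow> (\<forall>t. k t = 0))"
proof -
  interpret tep r s av ae phi c by (rule tep.intro) (rule assms)
  show ?thesis using part1 part2 by blast
qed

end
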